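(* Let $V\in\mathfrak M_S$ and let $\mathfrak h$ be a principal subalgebra of $\mathfrak g_2$. Then $\mathfrak h$ is adapted to $V$ if and only if $\theta_V\in H^{\mathfrak h}$, where $\theta_V\in G_2$ is defined by $\theta_V|_V=\mathrm{id}$, $\theta_V|_{V^\perp}=-\mathrm{id}$, and $H^{\mathfrak h}=\{F\in G_2: F\mathfrak hF^{-1}\subseteq\mathfrak h\}$.
   Context: Setup: Let $\langle\cdot,\cdot\rangle$ be the standard inner product on $\mathbb R^7$ with standard basis $e_1,\dots,e_7$, and let $\times$ be the anticommutative bilinear product on $\mathbb R^7$ determined by $e_i\times e_{i+1}=e_{i+3}$, $e_{i+1}\times e_{i+3}=e_i$, $e_{i+3}\times e_i=e_{i+1}$ (indices mod 7); it is a cross product. $G_2=\mathrm{Aut}(\mathbb R^7,\times)$, with Lie algebra $\mathfrak g_2=\mathrm{Der}(\mathbb R^7,\times)=\{d\in\mathfrak{gl}(7,\mathbb R): d(x\times y)=d(x)\times y+x\times d(y)\}$. $\mathfrak M_S=\{V\le\mathbb R^7:\dim V=3,\ V\times V\subseteq V\}$; for $V\in\mathfrak M_S$ one has $V\times V^\perp\subseteq V^\perp$ and $V^\perp\times V^\perp\subseteq V$, so $\theta_V$ is an automorphism of order two. For $V\in\mathfrak M_S$: $\mathfrak h_4^V=\{d\in\mathfrak g_2: d(V^\perp)\subseteq V^\perp\}$ and $\mathfrak m_4^V=\{d\in\mathfrak g_2: d(V)\subseteq V^\perp,\ d(V^\perp)\subseteq V\}$. A principal subalgebra of $\mathfrak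 g_2$ is a three-dimensional simple subalgebra $\mathfrak h$ whose complexification contains a principal (regular) nilpotent element of $\mathfrak g_2\otimes\mathbb C$ (one whose adjoint orbit is dense in the nilpotent variety). A principal subalgebra $\mathfrak h$ is adapted to $V\in\mathfrak M_S$ if $\mathfrak h=(\mathfrak h\cap\mathfrak h_4^V)\oplus(\mathfrak h\cap\mathfrak m_4^V)$. *)

theory Defs
  imports "HOL-Analysis.Analysis" "HOL-Library.Numeral_Type"
begin

text \<open>Indices of R^7 are the elements of the finite ring 7 = Z/7Z, so that
  index arithmetic is automatically mod 7.  Linear maps are 7x7 matrices.\<close>

definition g2_pos :: "7 \<Rightarrow> 7 \<Rightarrow> 7 \<Rightarrow> bool" where
  "g2_pos a b c \<longleftrightarrow> (\<exists>i::7. (a, b, c) = (i, i+1, i+3) \<or> (a, b, c) = (i+1, i+3, i)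
                                \<or> (a, b, c) = (i+3, i, i+1))"

definition g2_eps :: "7 \<Rightarrow> 7 \<Rightarrow> 7 \<Rightarrow> int" where
  "g2_eps a b c = (if g2_pos a b c then 1 else if g2_pos b a c then -1 else 0)"

definition cross7 :: "'a::comm_ring_1 ^ 7 \<Rightarrow> 'a ^ 7 \<Rightarrow> 'a ^ 7" where
  "cross7 x y = (\<chi> k. \<Sum>i\<in>UNIV. \<Sum>j\<in>UNIV. x $ i * y $ j * of_int (g2_eps i j k))"

definition G2 :: "('a::field ^ 7 ^ 7) set" where
  "G2 = {F. invertible F \<and> (\<forall>x y. F *v cross7 x y = cross7 (F *v x) (F *v y))}"

definition g2 :: "(real ^ 7 ^ 7) set" where
  "g2 = {d. \<forall>x y. d *v cross7 x y = cross7 (d *v x) y + cross7 x (d *v y)}"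

definition lie_bracket :: "'a::comm_ring_1 ^ 'n ^ 'n \<Rightarrow> 'a ^ 'n ^ 'n \<Rightarrow> 'a ^ 'n ^ 'n" where
  "lie_bracket A B = A ** B - B ** A"

definition M_S :: "(real ^ 7) set set" where
  "M_S = {V. subspace V \<and> dim V = 3 \<and> (\<forall>x\<in>V. \<forall>y\<in>V. cross7 x y \<in> V)}"

definition h4 :: "(real ^ 7) set \<Rightarrow> (real ^ 7 ^ 7) set" where
  "h4 V = {d \<in> g2. \<forall>w \<in> orthogonal_comp V. d *v w \<in> orthogonal_comp V}"

definition m4 :: "(real ^ 7) set \<Rightarrow> (real ^ 7 ^ 7) set" where
  "m4 V = {d \<in> g2. (\<forall>v \<in> V. d *v v \<in> orthogonal_comp V) \<and> (\<forall>w \<in> orthogonal_comp V. d *v w \<in> V)}"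

definition theta :: "(real ^ 7) set \<Rightarrow> real ^ 7 ^ 7" where
  "theta V = (THE F. (\<forall>v \<in> V. F *v v = v) \<and> (\<forall>w \<in> orthogonal_comp V. F *v w = - w))"

definition H_of :: "(real ^ 7 ^ 7) set \<Rightarrow> (real ^ 7 ^ 7) set" where
  "H_of h = {F \<in> G2. {F ** X ** matrix_inv F | X. X \<in> h} \<subseteq> h}"

definition cmat :: "real ^ 7 ^ 7 \<Rightarrow> complex ^ 7 ^ 7" where
  "cmat A = (\<chi> i j. complex_of_real (A $ i $ j))"

definition complexify :: "(real ^ 7 ^ 7) set \<Rightarrow> (complex ^ 7 ^ 7) set" where
  "complexify S = {cmat A + (\<chi> i j. \<i> * cmat B $ i $ j) | A B. A \<in> S \<and> B \<in> S}"

definition nilp_variety :: "(complex ^ 7 ^ 7) set" where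
  "nilp_variety = {x \<in> complexify g2. \<exists>k. \<forall>y \<in> complexify g2. (lie_bracket x ^^ k) y = 0}"

definition adj_orbit :: "complex ^ 7 ^ 7 \<Rightarrow> (complex ^ 7 ^ 7) set" where
  "adj_orbit x = {g ** x ** matrix_inv g | g. g \<in> G2}"

definition principal_nilpotent :: "complex ^ 7 ^ 7 \<Rightarrow> bool" where
  "principal_nilpotent e \<longleftrightarrow> e \<in> nilp_variety \<and> nilp_variety \<subseteq> closure (adj_orbit e)"

definition lie_subalgebra :: "(real ^ 7 ^ 7) set \<Rightarrow> bool" where
  "lie_subalgebra h \<longleftrightarrow> subspace h \<and> h \<subseteq> g2 \<and> (\<forall>a\<in>h. \<forall>b\<in>h. lie_bracket a b \<in> h)"

definition simple_lie :: "(real ^ 7 ^ 7) set \<Rightarrow> bool" where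
  "simple_lie h \<longleftrightarrow> (\<exists>a\<in>h. \<exists>b\<in>h. lie_bracket a b \<noteq> 0) \<and>
     (\<forall>I. subspace I \<and> I \<subseteq> h \<and> (\<forall>a\<in>h. \<forall>b\<in>I. lie_bracket a b \<in> I) \<longrightarrow> I = {0} \<or> I = h)"

definition principal_subalgebra :: "(real ^ 7 ^ 7) set \<Rightarrow> bool" where
  "principal_subalgebra h \<longleftrightarrow> lie_subalgebra h \<and> dim h = 3 \<and> simple_lie h \<and>
     (\<exists>e \<in> complexify h. principal_nilpotent e)"

definition adapted :: "(real ^ 7 ^ 7) set \<Rightarrow> (real ^ 7) set \<Rightarrow> bool" where
  "adapted h V \<longleftrightarrow> h = {a + b | a b. a \<in> h \<inter> h4 V \<and> b \<in> h \<inter> m4 V}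
                    \<and> (h \<inter> h4 V) \<inter> (h \<inter> m4 V) = {0}"

end

theory Submission
  imports Defs
begin
lemma U7: "(UNIV::7 set) = {0,1,2,3,4,5,6}"
proof -
  have "x \<in> {0,1,2,3,4,5,6}" for x :: 7
  proof (cases x)
    case (of_int z)
    then have "z \<in> {0,1,2,3,4,5,6}" by auto
    then show ?thesis using of_int by auto
  qed
  then show ?thesis by auto
qed

lemma all7: "(\<forall>i::7. P i) \<longleftrightarrow> P 0 \<and> P 1 \<and> P 2 \<and> P 3 \<and> P 4 \<and> P 5 \<and> P 6"
proof -
  have "(\<forall>i::7. P i) = (\<forall>i\<in>(UNIV::7 set). P i)" by simp
  also have "\<dots> = (\<forall>i\<in>{0,1,2,3,4,5,6}. P i)" by (simp only: U7)
  also have "\<dots> = (P 0 \<and> P 1 \<and> P 2 \<and> P 3 \<and> P 4 \<and> P 5 \<and> P 6)" by simp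
  finally show ?thesis .
qed

lemma sum7: "(\<Sum>i\<in>(UNIV::7 set). f i) = f 0 + f 1 + f 2 + f 3 + f 4 + f 5 + f 6"
  unfolding U7 by (simp add: add.assoc)

lemma g2_pos_iff: "g2_pos a b c \<longleftrightarrow> (b = a+1 \<and> c = a+3) \<or> (a = c+1 \<and> b = c+3) \<or> (c = b+1 \<and> a = b+3)"
proof
  assume "g2_pos a b c"
  then obtain i where "(a, b, c) = (i, i+1, i+3) \<or> (a, b, c) = (i+1, i+3, i) \<or> (a, b, c) = (i+3, i, i+1)"
    unfolding g2_pos_def by blast
  then show "(b = a+1 \<and> c = a+3) \<or> (a = c+1 \<and> b = c+3) \<or> (c = b+1 \<and> a = b+3)"
    by (metis prod.inject)
next
  assume "(b = a+1 \<and> c = a+3) \<or> (a = c+1 \<and> b = c+3) \<or> (c = b+1 \<and> a = b+3)"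
  then have "(a, b, c) = (a, a+1, a+3) \<or> (a, b, c) = (c+1, c+3, c) \<or> (a, b, c) = (b+3, b, b+1)"
    by (metis prod.inject)
  then show "g2_pos a b c" unfolding g2_pos_def by blast
qed

lemma c0: "cross7 x y $ 0 = x$4*y$5 - x$5*y$4 + x$1*y$3 - x$3*y$1 + x$2*y$6 - (x$6*y$2::'a::comm_ring_1)"
  unfolding cross7_def vec_lambda_beta sum7 g2_eps_def g2_pos_iff
  by simp

lemma c1: "cross7 x y $ 1 = x$5*y$6 - x$6*y$5 + x$2*y$4 - x$4*y$2 + x$3*y$0 - (x$0*y$3::'a::comm_ring_1)"
  unfolding cross7_def vec_lambda_beta sum7 g2_eps_def g2_pos_iff
  by simp

lemma c2: "cross7 x y $ 2 = x$6*y$0 - x$0*y$6 + x$3*y$5 - x$5*y$3 + x$4*y$1 - (x$1*y$4::'a::comm_ring_1)"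
  unfolding cross7_def vec_lambda_beta sum7 g2_eps_def g2_pos_iff
  by simp

lemma c3: "cross7 x y $ 3 = x$0*y$1 - x$1*y$0 + x$4*y$6 - x$6*y$4 + x$5*y$2 - (x$2*y$5::'a::comm_ring_1)"
  unfolding cross7_def vec_lambda_beta sum7 g2_eps_def g2_pos_iff
  by simp

lemma c4: "cross7 x y $ 4 = x$1*y$2 - x$2*y$1 + x$5*y$0 - x$0*y$5 + x$6*y$3 - (x$3*y$6::'a::comm_ring_1)"
  unfolding cross7_def vec_lambda_beta sum7 g2_eps_def g2_pos_iff
  by simp

lemma c5: "cross7 x y $ 5 = x$2*y$3 - x$3*y$2 + x$6*y$1 - x$1*y$6 + x$0*y$4 - (x$4*y$0::'a::comm_ring_1)"
  unfolding cross7_def vec_lambda_beta sum7 g2_eps_def g2_pos_iff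
  by simp

lemma c6: "cross7 x y $ 6 = x$3*y$4 - x$4*y$3 + x$0*y$2 - x$2*y$0 + x$1*y$5 - (x$5*y$1::'a::comm_ring_1)"
  unfolding cross7_def vec_lambda_beta sum7 g2_eps_def g2_pos_iff
  by simp

lemmas cc = c0 c1 c2 c3 c4 c5 c6
lemma cross_anti: "cross7 x y = - cross7 y (x::'a::comm_ring_1^7)"
  by (simp add: vec_eq_iff all7 cc algebra_simps)

lemma cross_add_left: "cross7 (x + y) z = cross7 x z + cross7 y (z::'a::comm_ring_1^7)"
  by (simp add: vec_eq_iff all7 cc algebra_simps)

lemma cross_add_right: "cross7 z (x + y) = cross7 z x + cross7 z (y::'a::comm_ring_1^7)"
  by (simp add: vec_eq_iff all7 cc algebra_simps)

lemma cross_scale_left: "cross7 (a *\<^sub>R x) z = a *\<^sub>R cross7 x (z::real^7)"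
  by (simp add: vec_eq_iff all7 cc algebra_simps)

lemma cross_scale_right: "cross7 z (a *\<^sub>R x) = a *\<^sub>R cross7 z (x::real^7)"
  by (simp add: vec_eq_iff all7 cc algebra_simps)

lemma cross_cyc: "inner (cross7 x y) z = inner (cross7 y z) (x::real^7)"
  by (simp add: inner_vec_def sum7 cc algebra_simps)

lemma cross_triple: "cross7 x (cross7 y x) = (inner x x) *\<^sub>R y - (inner x y) *\<^sub>R (x::real^7)"
  by (simp add: vec_eq_iff all7 inner_vec_def sum7 cc algebra_simps)

lemma cross_diff_left: "cross7 (x - y) z = cross7 x z - cross7 y (z::real^7)"
  by (simp add: vec_eq_iff all7 cc algebra_simps)
lemma cross_diff_right: "cross7 z (x - y) = cross7 z x - cross7 z (y::real^7)"
  by (simp add: vec_eq_iff all7 cc algebra_simps)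
lemma cross_zero_left: "cross7 0 y = (0::real^7)"
  by (simp add: vec_eq_iff all7 cc)
lemma cross_zero_right: "cross7 y 0 = (0::real^7)"
  by (simp add: vec_eq_iff all7 cc)
lemma cross_self: "cross7 x x = (0::real^7)"
  by (simp add: vec_eq_iff all7 cc algebra_simps)
lemma cross_inner_right: "inner (cross7 x y) (y::real^7) = 0"
  using cross_cyc[of x y y] by (simp add: cross_self)

lemma dbl0: "(q::real^7) + q = 0 \<Longrightarrow> q = 0"
  by (metis scaleR_2 scaleR_eq_0_iff zero_neq_numeral)

definition obasis :: "(real^7) set \<Rightarrow> (real^7) set" where
  "obasis V = (SOME B. B \<subseteq> V \<and> pairwise orthogonal B \<and> (\<forall>x\<in>B. norm x = 1) \<and> independent B \<and> card B = dim V \<and> span B = V)"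

definition proj :: "(real^7) set \<Rightarrow> real^7 \<Rightarrow> real^7" where
  "proj V x = (\<Sum>b\<in>obasis V. (inner x b) *\<^sub>R b)"

locale assoc3 =
  fixes V :: "(real^7) set"
  assumes sV: "subspace V" and dV: "dim V = 3" and cV: "\<And>x y. x \<in> V \<Longrightarrow> y \<in> V \<Longrightarrow> cross7 x y \<in> V"
begin

abbreviation "W \<equiv> orthogonal_comp V"
abbreviation "B \<equiv> obasis V"

lemma sW: "subspace W" by (rule subspace_orthogonal_comp)

lemma VW0: "x \<in> V \<Longrightarrow> x \<in> W \<Longrightarrow> x = 0"
  using orthogonal_Int_0[OF sV] by blast

lemma inVW: "v \<in> V \<Longrightarrow> w \<in> W \<Longrightarrow> inner v w = 0"
  by (simp add: orthogonal_comp_def orthogonal_def)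

lemma inWI: "(\<And>y. y \<in> V \<Longrightarrow> inner y w = 0) \<Longrightarrow> w \<in> W"
  by (simp add: orthogonal_comp_def orthogonal_def)

lemma B_props: "B \<subseteq> V \<and> pairwise orthogonal B \<and> (\<forall>x\<in>B. norm x = 1) \<and> independent B \<and> card B = dim V \<and> span B = V"
proof -
  have ex: "\<exists>B0. B0 \<subseteq> V \<and> pairwise orthogonal B0 \<and> (\<forall>x\<in>B0. norm x = 1) \<and> independent B0 \<and> card B0 = dim V \<and> span B0 = V"
    using orthonormal_basis_subspace[OF sV] by metis
  show ?thesis unfolding obasis_def by (rule someI_ex[OF ex])
qed

lemma BV: "B \<subseteq> V" and Borth: "pairwise orthogonal B" and Bnorm: "\<And>x. x \<in> B \<Longrightarrow> norm x = 1"
  and Bcard: "card B = 3" and Bspan: "span B = V"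
  using B_props dV by auto

lemma Bfin: "finite B" using Bcard by (metis card.infinite zero_neq_numeral)

lemma Binner: "b \<in> B \<Longrightarrow> b' \<in> B \<Longrightarrow> inner b b' = (if b = b' then 1 else 0)"
proof -
  assume b: "b \<in> B" "b' \<in> B"
  show ?thesis
  proof (cases "b = b'")
    case True
    have "norm b = 1" using Bnorm b by auto
    then have "inner b b = 1" by (metis norm_eq_sqrt_inner real_sqrt_eq_1_iff)
    then show ?thesis using True by simp
  next
    case False
    then show ?thesis using Borth b unfolding pairwise_def orthogonal_def by auto
  qed
qed

lemma cross_VW: "v \<in> V \<Longrightarrow> w \<in> W \<Longrightarrow> cross7 v w \<in> W"
proof (rule inWI)
  fix y assume v: "v \<in> V" and w: "w \<in> W" and y: "y \<in> V"
  have "inner y (cross7 v w) = inner (cross7 v w) y" by (simp add: inner_commute)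
  also have "\<dots> = inner (cross7 w y) v" by (rule cross_cyc)
  also have "\<dots> = inner (cross7 y v) w" by (rule cross_cyc)
  also have "\<dots> = 0" using inVW[OF cV[OF y v] w] .
  finally show "inner y (cross7 v w) = 0" .
qed

lemma cross_WV: "w \<in> W \<Longrightarrow> v \<in> V \<Longrightarrow> cross7 w v \<in> W"
  using cross_VW[of v w] cross_anti[of w v] subspace_neg[OF sW] by auto

lemma dimW: "dim W = 4"
proof -
  have "dim {y \<in> UNIV. \<forall>x\<in>V. orthogonal x y} + dim V = dim (UNIV :: (real^7) set)"
    by (rule dim_subspace_orthogonal_to_vectors) (auto simp: sV)
  moreover have "{y \<in> UNIV. \<forall>x\<in>V. orthogonal x y} = W" by (auto simp: orthogonal_comp_def)
  ultimately show ?thesis using dV by simp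
qed

lemma cross_WW: assumes w: "w \<in> W" and w': "w' \<in> W" shows "cross7 w w' \<in> V"
proof (cases "w = 0")
  case True then show ?thesis by (simp add: cross_zero_left subspace_0[OF sV])
next
  case False
  define f where "f = (\<lambda>v. cross7 v w)"
  have lin: "linear f" unfolding f_def
    by (rule linearI) (simp_all add: cross_add_left cross_scale_left)
  have ww: "inner w w \<noteq> 0" using False by simp
  have fW: "f b \<in> W" if "b \<in> B" for b using cross_VW[of b w] BV that w unfolding f_def by auto
  have ff: "inner (f b) (f b') = inner b b' * inner w w" if "b \<in> B" "b' \<in> B" for b b'
  proof -
    have "inner (f b) (f b') = inner (cross7 w (cross7 b' w)) b" unfolding f_def by (rule cross_cyc)
    also have "\<dots> = inner w w * inner b' b - inner w b' * inner w b"
      by (simp add: cross_triple inner_diff_left)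
    finally have e: "inner (f b) (f b') = inner w w * inner b' b - inner w b' * inner w b" .
    have z: "inner w b' = 0" "inner w b = 0" using inVW[of b' w] inVW[of b w] BV that w
      by (auto simp: inner_commute)
    show ?thesis using e z by (simp add: inner_commute)
  qed
  have fw: "inner (f b) w = 0" for b unfolding f_def by (rule cross_inner_right)
  have injf: "inj_on f B"
  proof (rule inj_onI)
    fix b b' assume b: "b \<in> B" "b' \<in> B" and e: "f b = f b'"
    have "inner (f b) (f b') = inner w w" using ff[OF b(1) b(1)] e Binner[OF b(1) b(1)] by simp
    then show "b = b'" using ff[OF b] Binner[OF b] ww by (auto split: if_splits)
  qed
  have wnot: "w \<notin> f ` B"
  proof
    assume "w \<in> f ` B" then obtain b where "w = f b" by auto
    then have "inner w w = 0" using fw[of b] by simp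
    then show False using ww by simp
  qed
  define C where "C = insert w (f ` B)"
  have cardC: "card C = 4" unfolding C_def using wnot injf Bfin Bcard
    by (simp add: card_image)
  have CW: "C \<subseteq> W" unfolding C_def using w fW by auto
  have orthC: "pairwise orthogonal C"
    unfolding C_def pairwise_def orthogonal_def
  proof (intro ballI impI)
    fix x y assume x: "x \<in> insert w (f ` B)" and y: "y \<in> insert w (f ` B)" and xy: "x \<noteq> y"
    show "inner x y = 0"
    proof -
      { fix b b' assume "b \<in> B" "b' \<in> B" "f b \<noteq> f b'"
        then have "inner (f b) (f b') = 0" using ff Binner by (auto split: if_splits) }
      moreover have "\<And>b. b \<in> B \<Longrightarrow> w \<noteq> f b" using wnot by auto
      ultimately show ?thesis using x y xy fw by (auto simp: inner_commute)
    qed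
  qed
  have C0: "0 \<notin> C"
  proof -
    have "f b \<noteq> 0" if "b \<in> B" for b using ff[OF that that] Binner[OF that that] ww by auto
    then show ?thesis unfolding C_def using False by auto
  qed
  have indC: "independent C" by (rule pairwise_orthogonal_independent[OF orthC C0])
  have "W \<subseteq> span C" by (rule card_ge_dim_independent[OF CW indC]) (simp add: dimW cardC)
  then have "w' \<in> span (insert w (f ` B))" using w' unfolding C_def by auto
  then obtain k where "w' - k *\<^sub>R w \<in> span (f ` B)" by (auto simp: span_breakdown_eq)
  also have "span (f ` B) = f ` V" using linear_span_image[OF lin, of B] Bspan by simp
  finally obtain v where v: "v \<in> V" "w' - k *\<^sub>R w = f v" by auto
  then have "w' = k *\<^sub>R w + cross7 v w" unfolding f_def by (simp add: algebra_simps)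
  then have "cross7 w w' = k *\<^sub>R cross7 w w + cross7 w (cross7 v w)"
    by (simp add: cross_add_right cross_scale_right)
  also have "\<dots> = inner w w *\<^sub>R v - inner w v *\<^sub>R w" by (simp add: cross_self cross_triple)
  also have "inner w v = 0" using inVW[OF v(1) w] by (simp add: inner_commute)
  finally show ?thesis using v(1) subspace_scale[OF sV] by simp
qed

lemma exists_unit: "\<exists>u. u \<in> V \<and> u \<noteq> 0"
proof -
  have "B \<noteq> {}" using Bcard by auto
  then obtain b where "b \<in> B" by auto
  then show ?thesis using BV Bnorm[of b] by (intro exI[of _ b]) auto
qed

lemma W_kill: assumes q: "q \<in> W" and k: "\<And>w. w \<in> W \<Longrightarrow> cross7 q w = 0" shows "q = 0"
proof -
  obtain u where u: "u \<in> V" "u \<noteq> 0" using exists_unit by auto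
  have "cross7 q (cross7 u q) = 0" using k cross_VW[OF u(1) q] by auto
  then have "inner q q *\<^sub>R u - inner q u *\<^sub>R q = 0" by (simp add: cross_triple)
  moreover have "inner q u = 0" using inVW[OF u(1) q] by (simp add: inner_commute)
  ultimately have "inner q q = 0" using u(2) by simp
  then show ?thesis by simp
qed

lemma proj_in: "proj V x \<in> V"
  unfolding proj_def using BV by (intro subspace_sum[OF sV] subspace_scale[OF sV]) auto

lemma proj_perp: "x - proj V x \<in> W"
proof (rule inWI)
  fix y assume y: "y \<in> V"
  have "orthogonal (x - proj V x) y"
  proof (rule orthogonal_to_span)
    show "y \<in> span B" using y Bspan by simp
    fix b' assume b': "b' \<in> B"
    have "inner (proj V x) b' = (\<Sum>b\<in>B. inner x b * inner b b')"
      unfolding proj_def by (simp add: inner_sum_left)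
    also have "\<dots> = (\<Sum>b\<in>B. if b = b' then inner x b else 0)"
      by (rule sum.cong) (auto simp: Binner b')
    also have "\<dots> = inner x b'" using Bfin b' by simp
    finally show "orthogonal (x - proj V x) b'" by (simp add: orthogonal_def inner_diff_left)
  qed
  then show "inner y (x - proj V x) = 0" by (simp add: orthogonal_def inner_commute)
qed

lemma proj_V: "v \<in> V \<Longrightarrow> proj V v = v"
  using VW0[of "v - proj V v"] subspace_diff[OF sV _ proj_in] proj_perp by auto

lemma proj_W: "w \<in> W \<Longrightarrow> proj V w = 0"
proof -
  assume w: "w \<in> W"
  have "proj V w = w - (w - proj V w)" by simp
  also have "\<dots> \<in> W" using subspace_diff[OF sW w proj_perp] .
  finally show ?thesis using VW0 proj_in by auto
qed

lemma proj_lin: "linear (proj V)"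
  by (rule linearI) (simp_all add: proj_def inner_add_left scaleR_add_left sum.distrib scaleR_sum_right)

definition "thf x = proj V x - (x - proj V x)"

lemma proj_add: "proj V (x + y) = proj V x + proj V y"
  by (simp add: proj_def inner_add_left scaleR_add_left sum.distrib)
lemma proj_scale: "proj V (c *\<^sub>R x) = c *\<^sub>R proj V x"
  by (simp add: proj_def scaleR_sum_right)

lemma thf_lin: "linear thf"
  by (rule linearI) (simp_all add: thf_def proj_add proj_scale algebra_simps)

definition "T = matrix thf"

lemma Tv: "T *v x = thf x"
  unfolding T_def by (rule matrix_works) (simp add: linear_matrix_vector_mul_eq thf_lin)

lemma T_V: "v \<in> V \<Longrightarrow> T *v v = v" by (simp add: Tv thf_def proj_V)
lemma T_W: "w \<in> W \<Longrightarrow> T *v w = - w" by (simp add: Tv thf_def proj_W)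

lemma decomp: "x = proj V x + (x - proj V x)" by simp

lemma theta_eq: "theta V = T"
  unfolding theta_def
proof (rule the_equality)
  show "(\<forall>v\<in>V. T *v v = v) \<and> (\<forall>w\<in>W. T *v w = - w)" using T_V T_W by auto
  fix F assume F: "(\<forall>v\<in>V. F *v v = v) \<and> (\<forall>w\<in>W. F *v w = - w)"
  show "F = T"
  proof (subst matrix_eq, intro allI)
    fix x
    have "F *v x = F *v proj V x + F *v (x - proj V x)"
      by (metis decomp matrix_vector_right_distrib)
    also have "\<dots> = proj V x - (x - proj V x)" using F proj_in proj_perp by simp
    also have "\<dots> = T *v x" by (simp add: Tv thf_def )
    finally show "F *v x = T *v x" .
  qed
qed

lemma TT: "T *v (T *v x) = x"
proof -
  define p where "p = proj V x" define q where "q = x - proj V x"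
  have pq: "p \<in> V" "q \<in> W" unfolding p_def q_def using proj_in proj_perp by auto
  have x: "x = p + q" unfolding p_def q_def by simp
  have "T *v x = p - q" unfolding x using T_V[OF pq(1)] T_W[OF pq(2)] by (simp add: matrix_vector_right_distrib)
  then have "T *v (T *v x) = T *v p - T *v q" by (simp add: matrix_vector_mult_diff_distrib)
  also have "\<dots> = x" using T_V[OF pq(1)] T_W[OF pq(2)] x by simp
  finally show ?thesis .
qed

lemma T_fixV: "T *v z = z \<Longrightarrow> z \<in> V"
proof -
  assume "T *v z = z"
  then have "proj V z - (z - proj V z) = z" by (simp add: Tv thf_def)
  then have "(z - proj V z) + (z - proj V z) = 0" by (simp add: algebra_simps)
  then have "z - proj V z = 0" by (rule dbl0)
  then have "z = proj V z" by simp
  then show ?thesis using proj_in[of z] by simp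
qed

lemma T_negW: "T *v z = - z \<Longrightarrow> z \<in> W"
proof -
  assume "T *v z = - z"
  then have "proj V z - (z - proj V z) = - z" by (simp add: Tv thf_def)
  then have "proj V z + proj V z = 0" by (simp add: algebra_simps)
  then show ?thesis using proj_perp[of z] dbl0 by fastforce
qed

lemma TT_mat: "T ** T = mat 1"
  by (subst matrix_eq) (simp add: matrix_vector_mul_assoc[symmetric] TT matrix_vector_mul_lid)

lemma T_inv: "matrix_inv T = T"
  unfolding matrix_inv_def
proof (rule some_equality)
  show "T ** T = mat 1 \<and> T ** T = mat 1" using TT_mat by simp
  fix A assume A: "T ** A = mat 1 \<and> A ** T = mat 1"
  have "A = A ** (T ** T)" using TT_mat by (simp add: matrix_mul_rid)
  also have "\<dots> = (A ** T) ** T" by (simp add: matrix_mul_assoc)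
  also have "\<dots> = T" using A by (simp add: matrix_mul_lid)
  finally show "A = T" .
qed

lemma T_G2: "T \<in> G2"
  unfolding G2_def
proof (intro CollectI conjI allI)
  show "invertible T" unfolding invertible_def using TT_mat by blast
  fix x y
  define p where "p = proj V x" define q where "q = x - proj V x"
  define p' where "p' = proj V y" define q' where "q' = y - proj V y"
  have pq: "p \<in> V" "q \<in> W" "p' \<in> V" "q' \<in> W" unfolding p_def q_def p'_def q'_def
    using proj_in proj_perp by auto
  have x: "x = p + q" and y: "y = p' + q'" unfolding p_def q_def p'_def q'_def by simp_all
  have Tx: "T *v x = p - q" unfolding x using T_V T_W pq by (simp add: matrix_vector_right_distrib)
  have Ty: "T *v y = p' - q'" unfolding y using T_V T_W pq by (simp add: matrix_vector_right_distrib)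
  have "T *v cross7 x y = T *v cross7 p p' + T *v cross7 p q' + T *v cross7 q p' + T *v cross7 q q'"
    unfolding x y by (simp add: cross_add_left cross_add_right matrix_vector_right_distrib add.assoc)
  also have "\<dots> = cross7 p p' - cross7 p q' - cross7 q p' + cross7 q q'"
    using T_V[OF cV[OF pq(1) pq(3)]] T_W[OF cross_VW[OF pq(1) pq(4)]] T_W[OF cross_WV[OF pq(2) pq(3)]]
      T_V[OF cross_WW[OF pq(2) pq(4)]] by simp
  also have "\<dots> = cross7 (T *v x) (T *v y)"
    unfolding Tx Ty by (simp add: cross_diff_left cross_diff_right algebra_simps)
  finally show "T *v cross7 x y = cross7 (T *v x) (T *v y)" .
qed

lemma g2D: "d \<in> g2 \<Longrightarrow> d *v cross7 x y = cross7 (d *v x) y + cross7 x (d *v y)"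
  by (simp add: g2_def)

lemma h4_pres_V: assumes d: "d \<in> h4 V" and v: "v \<in> V" shows "d *v v \<in> V"
proof -
  have dg: "d \<in> g2" and dW: "\<And>w. w \<in> W \<Longrightarrow> d *v w \<in> W" using d by (auto simp: h4_def)
  define p where "p = proj V (d *v v)" define q where "q = d *v v - p"
  have p: "p \<in> V" and q: "q \<in> W" unfolding p_def q_def using proj_in proj_perp by auto
  have "q = 0"
  proof (rule W_kill[OF q])
    fix w assume w: "w \<in> W"
    have "cross7 q w = d *v cross7 v w - cross7 p w - cross7 v (d *v w)"
      using g2D[OF dg, of v w] unfolding q_def by (simp add: cross_diff_left algebra_simps)
    also have "\<dots> \<in> W"
      using dW[OF cross_VW[OF v w]] cross_VW[OF p w] cross_VW[OF v dW[OF w]]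
      by (intro subspace_diff[OF sW]) auto
    finally have "cross7 q w \<in> W" .
    then show "cross7 q w = 0" using VW0 cross_WW[OF q w] by auto
  qed
  then show ?thesis using p unfolding q_def by simp
qed

lemma h4_iff: assumes dg: "d \<in> g2" shows "d \<in> h4 V \<longleftrightarrow> (\<forall>x. T *v (d *v x) = d *v (T *v x))"
proof
  assume d: "d \<in> h4 V"
  have dW: "\<And>w. w \<in> W \<Longrightarrow> d *v w \<in> W" using d by (auto simp: h4_def)
  show "\<forall>x. T *v (d *v x) = d *v (T *v x)"
  proof
    fix x
    define p where "p = proj V x" define q where "q = x - proj V x"
    have pq: "p \<in> V" "q \<in> W" unfolding p_def q_def using proj_in proj_perp by auto
    have x: "x = p + q" unfolding p_def q_def by simp
    show "T *v (d *v x) = d *v (T *v x)" unfolding x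
      using T_V[OF h4_pres_V[OF d pq(1)]] T_W[OF dW[OF pq(2)]] T_V[OF pq(1)] T_W[OF pq(2)]
      by (simp add: matrix_vector_right_distrib matrix_vector_mult_diff_distrib)
  qed
next
  assume c: "\<forall>x. T *v (d *v x) = d *v (T *v x)"
  have "d *v w \<in> W" if w: "w \<in> W" for w
  proof (rule T_negW)
    have "d *v (- w) = - (d *v w)" by (metis add_right_imp_eq matrix_vector_right_distrib add.left_inverse matrix_vector_mult_0_right)
    then show "T *v (d *v w) = - (d *v w)" using c T_W[OF w] by simp
  qed
  then show "d \<in> h4 V" using dg by (auto simp: h4_def)
qed

lemma m4_iff: assumes dg: "d \<in> g2" shows "d \<in> m4 V \<longleftrightarrow> (\<forall>x. T *v (d *v x) = - (d *v (T *v x)))"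
proof
  assume d: "d \<in> m4 V"
  have dV: "\<And>v. v \<in> V \<Longrightarrow> d *v v \<in> W" and dW: "\<And>w. w \<in> W \<Longrightarrow> d *v w \<in> V" using d by (auto simp: m4_def)
  show "\<forall>x. T *v (d *v x) = - (d *v (T *v x))"
  proof
    fix x
    define p where "p = proj V x" define q where "q = x - proj V x"
    have pq: "p \<in> V" "q \<in> W" unfolding p_def q_def using proj_in proj_perp by auto
    have x: "x = p + q" unfolding p_def q_def by simp
    show "T *v (d *v x) = - (d *v (T *v x))" unfolding x
      using T_W[OF dV[OF pq(1)]] T_V[OF dW[OF pq(2)]] T_V[OF pq(1)] T_W[OF pq(2)]
      by (simp add: matrix_vector_right_distrib matrix_vector_mult_diff_distrib)
  qed
next
  assume c: "\<forall>x. T *v (d *v x) = - (d *v (T *v x))"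
  have neg: "d *v (- w) = - (d *v w)" for w
    by (metis add_right_imp_eq matrix_vector_right_distrib add.left_inverse matrix_vector_mult_0_right)
  have "d *v v \<in> W" if v: "v \<in> V" for v
    by (rule T_negW) (use c T_V[OF v] in simp)
  moreover have "d *v w \<in> V" if w: "w \<in> W" for w
    by (rule T_fixV) (use c T_W[OF w] neg in simp)
  ultimately show "d \<in> m4 V" using dg by (auto simp: m4_def)
qed

end

lemma half_split: "(1/2::real) *\<^sub>R (x + y) + (1/2) *\<^sub>R (x - y) = (x::'a::real_vector)"
proof -
  have "(1/2::real) *\<^sub>R (x + y) + (1/2) *\<^sub>R (x - y) = (1/2::real) *\<^sub>R (x + x)" by (simp add: algebra_simps)
  also have "(1/2::real) *\<^sub>R (x + x) = x" by (simp add: scaleR_2[symmetric])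
  finally show ?thesis .
qed

lemma zero_g2: "0 \<in> g2"
  by (simp add: g2_def cross_zero_left cross_zero_right)

theorem mainTheorem10:
  assumes "V \<in> M_S" and "principal_subalgebra h"
  shows "adapted h V \<longleftrightarrow> theta V \<in> H_of h"
proof -
  from assms(1) have a3: "assoc3 V" unfolding M_S_def assoc3_def by blast
  interpret assoc3 V by (rule a3)
  have sh: "subspace h" and hg: "h \<subseteq> g2"
    using assms(2) by (auto simp: principal_subalgebra_def lie_subalgebra_def)
  have "theta V \<in> H_of h \<longleftrightarrow> {T ** X ** T | X. X \<in> h} \<subseteq> h"
    unfolding H_of_def theta_eq using T_G2 by (simp add: T_inv)
  also have "\<dots> \<longleftrightarrow> (\<forall>X\<in>h. T ** X ** T \<in> h)" by blast
  finally have Hiff: "theta V \<in> H_of h \<longleftrightarrow> (\<forall>X\<in>h. T ** X ** T \<in> h)" .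
  have Mv: "(T ** X ** T) *v x = T *v (X *v (T *v x))" for X x
    by (simp add: matrix_vector_mul_assoc[symmetric])
  show ?thesis unfolding Hiff
  proof
    assume ad: "adapted h V"
    show "\<forall>X\<in>h. T ** X ** T \<in> h"
    proof
      fix X assume X: "X \<in> h"
      then obtain a b where ab: "X = a + b" "a \<in> h" "a \<in> h4 V" "b \<in> h" "b \<in> m4 V"
        using ad unfolding adapted_def by blast
      have ca: "\<forall>x. T *v (a *v x) = a *v (T *v x)" using h4_iff[of a] ab hg by auto
      have cb: "\<forall>x. T *v (b *v x) = - (b *v (T *v x))" using m4_iff[of b] ab hg by auto
      have "T ** X ** T = a - b"
      proof (subst matrix_eq, intro allI)
        fix x
        show "(T ** X ** T) *v x = (a - b) *v x"
          unfolding Mv ab(1) using ca cb TT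
          by (simp add: matrix_vector_mult_add_rdistrib matrix_vector_right_distrib matrix_vector_mult_diff_rdistrib)
      qed
      then show "T ** X ** T \<in> h" using subspace_diff[OF sh ab(2) ab(4)] by simp
    qed
  next
    assume H: "\<forall>X\<in>h. T ** X ** T \<in> h"
    have split: "\<exists>a b. X = a + b \<and> a \<in> h \<inter> h4 V \<and> b \<in> h \<inter> m4 V" if X: "X \<in> h" for X
    proof -
      define Y where "Y = T ** X ** T"
      have Y: "Y \<in> h" using H X unfolding Y_def by auto
      have Yv: "Y *v x = T *v (X *v (T *v x))" for x unfolding Y_def by (rule Mv)
      define a where "a = (1/2::real) *\<^sub>R (X + Y)"
      define b where "b = (1/2::real) *\<^sub>R (X - Y)"
      have ah: "a \<in> h" unfolding a_def using X Y by (intro subspace_scale[OF sh] subspace_add[OF sh])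
      have bh: "b \<in> h" unfolding b_def using X Y by (intro subspace_scale[OF sh] subspace_diff[OF sh])
      have av: "a *v x = (1/2::real) *\<^sub>R (X *v x + T *v (X *v (T *v x)))" for x
        unfolding a_def by (simp add: scaleR_matrix_vector_assoc[symmetric] matrix_vector_mult_add_rdistrib Yv)
      have bv: "b *v x = (1/2::real) *\<^sub>R (X *v x - T *v (X *v (T *v x)))" for x
        unfolding b_def by (simp add: scaleR_matrix_vector_assoc[symmetric] matrix_vector_mult_diff_rdistrib Yv)
      have ca: "\<forall>x. T *v (a *v x) = a *v (T *v x)"
        by (simp add: av matrix_vector_mult_scaleR matrix_vector_right_distrib TT algebra_simps)
      have cb: "\<forall>x. T *v (b *v x) = - (b *v (T *v x))"
        by (simp add: bv matrix_vector_mult_scaleR matrix_vector_mult_diff_distrib TT algebra_simps)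
      have a4: "a \<in> h4 V" using h4_iff[of a] ah hg ca by auto
      have b4: "b \<in> m4 V" using m4_iff[of b] bh hg cb by auto
      have "X = a + b" unfolding a_def b_def by (rule half_split[symmetric])
      then show ?thesis using ah bh a4 b4 by blast
    qed
    have eq: "h = {a + b |a b. a \<in> h \<inter> h4 V \<and> b \<in> h \<inter> m4 V}"
    proof
      show "h \<subseteq> {a + b |a b. a \<in> h \<inter> h4 V \<and> b \<in> h \<inter> m4 V}" using split by blast
      show "{a + b |a b. a \<in> h \<inter> h4 V \<and> b \<in> h \<inter> m4 V} \<subseteq> h"
        using subspace_add[OF sh] by blast
    qed
    have int: "(h \<inter> h4 V) \<inter> (h \<inter> m4 V) = {0}"
    proof
      show "(h \<inter> h4 V) \<inter> (h \<inter> m4 V) \<subseteq> {0}"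
      proof
        fix d assume d: "d \<in> (h \<inter> h4 V) \<inter> (h \<inter> m4 V)"
        then have dg: "d \<in> g2" using hg by auto
        have ca: "\<forall>x. T *v (d *v x) = d *v (T *v x)" using h4_iff[OF dg] d by auto
        have cb: "\<forall>x. T *v (d *v x) = - (d *v (T *v x))" using m4_iff[OF dg] d by auto
        have z: "d *v (T *v x) = 0" for x
        proof -
          have "d *v (T *v x) = T *v (d *v x)" using ca by simp
          also have "\<dots> = - (d *v (T *v x))" using cb by simp
          finally have "d *v (T *v x) = - (d *v (T *v x))" .
          then have "d *v (T *v x) + d *v (T *v x) = 0" by (simp add: eq_neg_iff_add_eq_0)
          then show ?thesis by (rule dbl0)
        qed
        have "d = 0"
        proof (subst matrix_eq, intro allI)
          fix x
          have "d *v x = d *v (T *v (T *v x))" using TT by simp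
          also have "\<dots> = 0" by (rule z)
          finally show "d *v x = 0 *v x" by simp
        qed
        then show "d \<in> {0}" by simp
      qed
      show "{0} \<subseteq> (h \<inter> h4 V) \<inter> (h \<inter> m4 V)"
        using subspace_0[OF sh] zero_g2 subspace_0[OF sW] subspace_0[OF sV]
        by (auto simp: h4_def m4_def)
    qed
    show "adapted h V" unfolding adapted_def using eq int by blast
  qed
qed

end
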